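(* Consider a system of $n$ equations $x_i=f_i$ ($i=1,\dots,n$) over a directed set $\mathbb D$ where all right-hand sides $f_i:(\{x_1,\dots,x_n\}\to\mathbb D)\to\mathbb D$ are monotonic, and run algorithm SRR (defined below) from an arbitrary initial mapping $\rho_0$ by calling $\mathsf{solve}(n)$. Then: (1) If $\mathbb D$ has height $h$ and $\Box=\sqcup$ is a binary upper bound operator on $\mathbb D$, then SRR terminates with a post solution after at most $n+\frac h2 n(n+1)$ evaluations of right-hand sides. (2) If $\Box=\boxdot$ (for arbitrary widening $\nabla$ and narrowing $\triangle$, and $\mathbb D$ possibly having infinite ascending chains), SRR terminates and returns a post solution.
   Context: Algorithm SRR (structured round-robin) with binary operator $\Box$, maintaining a global mapping $\rho$: the recursive procedure $\mathsf{solve}(i)$ does: if $i=0$ return; call $\mathsf{solve}(i-1)$; compute $new:=\rho[x_i]\,\Box\, f_i\,\rho$ (one evaluation of a right-hand side); if $\rho[x_i]\neq new$ then set $\rho[x_i]:=new$ and call $\mathsf{solve}(i)$. A directed set is a poset in which any two elements have an upper bound; a binary upper bound operator $\sqcup$ returns some upper bound $a\sqcup b\sqsupseteq a,b$. $\mathbb D$ has height $h$ if $h$ is the maximal length of a strictly increasing chain $d_0\sqsubset d_1\sqsubset\dots\sqsubset d_h$. Monotonic: $\rho\sqsubseteq\rho'$ pointwise implies $f\rho\sqsubseteq f\rho'$. Post solution: $\rho[x_i]\sqsupseteq f_i\rho$ for all $i$. A widening operator is a binary operator $\nabla$ on $\mathbb D$ with $a\sqsubseteq a\nabla b$ and $b\sqsubseteq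 a\nabla b$ for all $a,b$, such that there is no infinite sequence $a_0,a_1,\dots$ with $a_{i+1}=a_i\nabla b_i$ and $a_{i+1}\neq a_i$ for all $i$. A narrowing operator is a binary operator $\triangle$ such that $b\sqsubseteq a$ implies $b\sqsubseteq a\triangle b\sqsubseteq a$, and there is no infinite sequence with $b_i\sqsubseteq a_i$, $a_{i+1}=a_i\triangle b_i$, $a_{i+1}\ne a_i$ for all $i$. $a\boxdot b=a\triangle b$ if $b\sqsubseteq a$, else $a\nabla b$. *)

theory Defs
  imports Complex_Main
begin

text \<open>Variables x_1..x_n are the natural numbers 1..n; a mapping is a function
  nat => 'd (only the values at 1..n are relevant). Right-hand side f_i is f i.\<close>

definition directed_set :: "'d::order itself \<Rightarrow> bool" where
  "directed_set _ \<longleftrightarrow> (\<forall>a b :: 'd. \<exists>c. a \<le> c \<and> b \<le> c)"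

definition upper_bound_op :: "('d::order \<Rightarrow> 'd \<Rightarrow> 'd) \<Rightarrow> bool" where
  "upper_bound_op j \<longleftrightarrow> (\<forall>a b. a \<le> j a b \<and> b \<le> j a b)"

definition strict_chain :: "(nat \<Rightarrow> 'd::order) \<Rightarrow> nat \<Rightarrow> bool" where
  "strict_chain c m \<longleftrightarrow> (\<forall>i<m. c i < c (Suc i))"

definition has_height :: "'d::order itself \<Rightarrow> nat \<Rightarrow> bool" where
  "has_height _ h \<longleftrightarrow> (\<exists>c :: nat \<Rightarrow> 'd. strict_chain c h) \<and>
     (\<forall>(c :: nat \<Rightarrow> 'd) m. strict_chain c m \<longrightarrow> m \<le> h)"

definition monotonic_rhs :: "nat \<Rightarrow> ((nat \<Rightarrow> 'd::order) \<Rightarrow> 'd) \<Rightarrow> bool" where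
  "monotonic_rhs n g \<longleftrightarrow>
     (\<forall>\<rho> \<rho>'. (\<forall>j\<in>{1..n}. \<rho> j \<le> \<rho>' j) \<longrightarrow> g \<rho> \<le> g \<rho>')"

definition post_solution :: "nat \<Rightarrow> (nat \<Rightarrow> (nat \<Rightarrow> 'd::order) \<Rightarrow> 'd) \<Rightarrow> (nat \<Rightarrow> 'd) \<Rightarrow> bool" where
  "post_solution n f \<rho> \<longleftrightarrow> (\<forall>i\<in>{1..n}. f i \<rho> \<le> \<rho> i)"

definition widening :: "('d::order \<Rightarrow> 'd \<Rightarrow> 'd) \<Rightarrow> bool" where
  "widening w \<longleftrightarrow> (\<forall>a b. a \<le> w a b \<and> b \<le> w a b) \<and>
     \<not> (\<exists>(a :: nat \<Rightarrow> 'd) b. \<forall>i. a (Suc i) = w (a i) (b i) \<and> a (Suc i) \<noteq> a i)"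

definition narrowing :: "('d::order \<Rightarrow> 'd \<Rightarrow> 'd) \<Rightarrow> bool" where
  "narrowing nr \<longleftrightarrow> (\<forall>a b. b \<le> a \<longrightarrow> b \<le> nr a b \<and> nr a b \<le> a) \<and>
     \<not> (\<exists>(a :: nat \<Rightarrow> 'd) b. \<forall>i. b i \<le> a i \<and> a (Suc i) = nr (a i) (b i) \<and> a (Suc i) \<noteq> a i)"

definition boxdot :: "('d::order \<Rightarrow> 'd \<Rightarrow> 'd) \<Rightarrow> ('d \<Rightarrow> 'd \<Rightarrow> 'd) \<Rightarrow> 'd \<Rightarrow> 'd \<Rightarrow> 'd" where
  "boxdot w nr a b = (if b \<le> a then nr a b else w a b)"

text \<open>Big-step semantics of SRR: srr box f i \<rho> \<rho>' k means that the call solve(i)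
  started in global mapping \<rho> terminates with global mapping \<rho>' after exactly
  k evaluations of right-hand sides. The semantics is deterministic, so existence
  of a derivation is exactly termination of the run.\<close>

inductive srr :: "('d \<Rightarrow> 'd \<Rightarrow> 'd) \<Rightarrow> (nat \<Rightarrow> (nat \<Rightarrow> 'd) \<Rightarrow> 'd) \<Rightarrow>
    nat \<Rightarrow> (nat \<Rightarrow> 'd) \<Rightarrow> (nat \<Rightarrow> 'd) \<Rightarrow> nat \<Rightarrow> bool"
  for box f where
  zero: "srr box f 0 \<rho> \<rho> 0"
| stable: "\<lbrakk> srr box f i \<rho> \<rho>1 k1; box (\<rho>1 (Suc i)) (f (Suc i) \<rho>1) = \<rho>1 (Suc i) \<rbrakk>
     \<Longrightarrow> srr box f (Suc i) \<rho> \<rho>1 (k1 + 1)"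
| update: "\<lbrakk> srr box f i \<rho> \<rho>1 k1; box (\<rho>1 (Suc i)) (f (Suc i) \<rho>1) \<noteq> \<rho>1 (Suc i);
     srr box f (Suc i) (\<rho>1(Suc i := box (\<rho>1 (Suc i)) (f (Suc i) \<rho>1))) \<rho>2 k2 \<rbrakk>
     \<Longrightarrow> srr box f (Suc i) \<rho> \<rho>2 (k1 + 1 + k2)"

end

theory Submission
  imports Defs
begin

definition ht :: "'d::order \<Rightarrow> nat" where
  "ht d = (GREATEST m. \<exists>c. strict_chain c m \<and> c 0 = d)"

lemma ht_bound:
  assumes H: "has_height TYPE('d::order) h"
  shows "(\<exists>c. strict_chain c y \<and> c 0 = (d::'d)) \<Longrightarrow> y \<le> h"
  using H unfolding has_height_def by blast

lemma ht_props:
  assumes H: "has_height TYPE('d::order) h"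
  shows "\<exists>c. strict_chain c (ht (d::'d)) \<and> c 0 = d" and "ht d \<le> h"
proof -
  have P0: "\<exists>c. strict_chain c 0 \<and> c 0 = d"
    by (rule exI[of _ "\<lambda>_. d"]) (simp add: strict_chain_def)
  show A: "\<exists>c. strict_chain c (ht d) \<and> c 0 = d" unfolding ht_def
    by (rule GreatestI_nat[where P="\<lambda>m. \<exists>c. strict_chain c m \<and> c 0 = d", OF P0]) (rule ht_bound[OF H])
  show "ht d \<le> h" by (rule ht_bound[OF H A])
qed

lemma ht_lt:
  assumes H: "has_height TYPE('d::order) h" and lt: "(d::'d) < d'"
  shows "ht d' < ht d"
proof -
  obtain c where c: "strict_chain c (ht d')" "c 0 = d'" using ht_props(1)[OF H] by blast
  define c' where "c' = (\<lambda>i. case i of 0 \<Rightarrow> d | Suc j \<Rightarrow> c j)"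
  have "strict_chain c' (Suc (ht d'))" unfolding strict_chain_def
  proof (intro allI impI)
    fix i assume i: "i < Suc (ht d')"
    show "c' i < c' (Suc i)"
    proof (cases i)
      case 0 then show ?thesis using c lt by (simp add: c'_def)
    next
      case (Suc j) then show ?thesis using c i by (simp add: c'_def strict_chain_def)
    qed
  qed
  moreover have "c' 0 = d" by (simp add: c'_def)
  ultimately have "Suc (ht d') \<le> ht d" unfolding ht_def
    by (intro Greatest_le_nat[where b=h] ht_bound[OF H]) blast+
  then show ?thesis by simp
qed

lemma srr_frame: "srr box f i \<rho> \<rho>' k \<Longrightarrow> (j = 0 \<or> i < j) \<Longrightarrow> \<rho>' j = \<rho> j"
  by (induction rule: srr.induct) auto

lemma srr_post: "srr box f i \<rho> \<rho>' k \<Longrightarrow> (\<forall>a b. box a b = a \<longrightarrow> b \<le> a)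
   \<Longrightarrow> \<forall>j\<in>{1..i}. f j \<rho>' \<le> \<rho>' j"
proof (induction rule: srr.induct)
  case (zero \<rho>) then show ?case by simp
next
  case (stable i \<rho> \<rho>1 k1)
  then show ?case by (auto simp: le_Suc_eq)
next
  case (update i \<rho> \<rho>1 k1 \<rho>2 k2)
  then show ?case by blast
qed

abbreviation S :: "nat \<Rightarrow> (nat \<Rightarrow> 'd::order) \<Rightarrow> nat" where
  "S i \<sigma> \<equiv> (\<Sum>j\<in>{1..i}. j * ht (\<sigma> j))"

lemma partC:
  fixes join :: "'d::order \<Rightarrow> 'd \<Rightarrow> 'd"
  assumes H: "has_height TYPE('d) h" and J: "upper_bound_op join"
  shows "\<exists>\<rho>' k. srr join f i \<rho> \<rho>' k \<and> (\<forall>j. \<rho> j \<le> \<rho>' j) \<and> k + S i \<rho>' \<le> i + S i \<rho>"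
proof (induction i arbitrary: \<rho>)
  case 0 show ?case by (intro exI conjI, rule srr.zero) auto
next
  case (Suc i)
  show ?case
  proof (induction "ht (\<rho> (Suc i))" arbitrary: \<rho> rule: less_induct)
    case less
    obtain \<rho>1 k1 where r1: "srr join f i \<rho> \<rho>1 k1" "\<forall>j. \<rho> j \<le> \<rho>1 j" "k1 + S i \<rho>1 \<le> i + S i \<rho>"
      using Suc.IH by blast
    have eq: "\<rho>1 (Suc i) = \<rho> (Suc i)" using srr_frame[OF r1(1)] by simp
    have sumS: "\<And>\<sigma>::nat\<Rightarrow>'d. S (Suc i) \<sigma> = S i \<sigma> + Suc i * ht (\<sigma> (Suc i))" by simp
    show ?case
    proof (cases "join (\<rho>1 (Suc i)) (f (Suc i) \<rho>1) = \<rho>1 (Suc i)")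
      case True
      have "srr join f (Suc i) \<rho> \<rho>1 (k1+1)" by (rule srr.stable[OF r1(1) True])
      then show ?thesis using r1 eq by (intro exI[of _ \<rho>1] exI[of _ "k1+1"]) (auto simp: sumS)
    next
      case False
      define nw where "nw = join (\<rho>1 (Suc i)) (f (Suc i) \<rho>1)"
      define \<rho>2 where "\<rho>2 = \<rho>1(Suc i := nw)"
      have lt: "\<rho>1 (Suc i) < nw" using J False unfolding upper_bound_op_def nw_def
        by (simp add: order_less_le)
      have hlt: "ht (\<rho>2 (Suc i)) < ht (\<rho> (Suc i))" using ht_lt[OF H lt] eq by (simp add: \<rho>2_def)
      obtain \<rho>3 k2 where r3: "srr join f (Suc i) \<rho>2 \<rho>3 k2" "\<forall>j. \<rho>2 j \<le> \<rho>3 j"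
          "k2 + S (Suc i) \<rho>3 \<le> Suc i + S (Suc i) \<rho>2"
        using less(1)[of \<rho>2, OF hlt] by blast
      have run: "srr join f (Suc i) \<rho> \<rho>3 (k1 + 1 + k2)"
        using srr.update[OF r1(1) False r3(1)[unfolded \<rho>2_def nw_def]] .
      have m12: "\<forall>j. \<rho>1 j \<le> \<rho>2 j" using lt by (auto simp: \<rho>2_def order_less_imp_le)
      have mon: "\<forall>j. \<rho> j \<le> \<rho>3 j" using r1(2) m12 r3(2) by (meson order_trans)
      have S12: "S i \<rho>2 = S i \<rho>1" by (rule sum.cong) (auto simp: \<rho>2_def)
      have a1: "k2 + S i \<rho>3 + Suc i * ht (\<rho>3 (Suc i)) \<le> Suc i + S i \<rho>1 + Suc i * ht (\<rho>2 (Suc i))"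
        using r3(3) S12 by (simp add: sumS)
      have a2: "Suc i * (ht (\<rho>2 (Suc i)) + 1) \<le> Suc i * ht (\<rho> (Suc i))"
        using hlt by (intro mult_le_mono2) simp
      have "k1 + 1 + k2 + S (Suc i) \<rho>3 \<le> Suc i + S (Suc i) \<rho>"
        using a1 a2 r1(3) by (simp add: sumS algebra_simps)
      then show ?thesis using run mon by blast
    qed
  qed
qed

lemma boxdot_prop:
  assumes "widening w" shows "\<forall>a b. boxdot w nr a b = a \<longrightarrow> b \<le> a"
  using assms unfolding widening_def boxdot_def by (metis)

lemma post_step:
  assumes post1: "\<forall>j\<in>{1..i}. f j \<rho>1 \<le> \<rho>1 j"
    and b: "f (Suc i) \<rho>1 \<le> c" and c: "c \<le> \<rho>1 (Suc i)" and n: "Suc i \<le> n"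
    and mono: "\<forall>i\<in>{1..n}. monotonic_rhs n (f i)"
  shows "\<forall>j\<in>{1..Suc i}. f j (\<rho>1(Suc i := c)) \<le> (\<rho>1(Suc i := c)) j"
proof
  fix j assume j: "j \<in> {1..Suc i}"
  have le: "\<forall>l\<in>{1..n}. (\<rho>1(Suc i := c)) l \<le> \<rho>1 l" using c by auto
  have "f j (\<rho>1(Suc i := c)) \<le> f j \<rho>1"
    using mono j n le unfolding monotonic_rhs_def by auto
  moreover have "f j \<rho>1 \<le> (\<rho>1(Suc i := c)) j"
  proof (cases "j = Suc i")
    case True then show ?thesis using b by simp
  next
    case False then show ?thesis using post1 j by auto
  qed
  ultimately show "f j (\<rho>1(Suc i := c)) \<le> (\<rho>1(Suc i := c)) j" by (rule order_trans)
qed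

lemma partA:
  assumes W: "widening w" and NR: "narrowing nr" and mono: "\<forall>i\<in>{1..n}. monotonic_rhs n (f i)"
  shows "i \<le> n \<Longrightarrow> (\<forall>j\<in>{1..i}. f j \<rho> \<le> \<rho> j) \<Longrightarrow>
     \<exists>\<rho>' k. srr (boxdot w nr) f i \<rho> \<rho>' k \<and> (\<forall>j. \<rho>' j \<le> \<rho> j)"
proof (induction i arbitrary: \<rho>)
  case 0 show ?case by (intro exI conjI, rule srr.zero) auto
next
  case (Suc i)
  define N where "N = {(x, y). \<exists>b. b \<le> y \<and> x = nr y b \<and> x \<noteq> y}"
  have wfN: "wf N"
    unfolding wf_iff_no_infinite_down_chain
  proof
    assume "\<exists>g. \<forall>i. (g (Suc i), g i) \<in> N"
    then obtain g where "\<forall>i. \<exists>b. b \<le> g i \<and> g (Suc i) = nr (g i) b \<and> g (Suc i) \<noteq> g i"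
      unfolding N_def by auto
    then obtain B where "\<forall>i. B i \<le> g i \<and> g (Suc i) = nr (g i) (B i) \<and> g (Suc i) \<noteq> g i"
      by metis
    then show False using NR unfolding narrowing_def by blast
  qed
  have "\<forall>\<rho>. \<rho> (Suc i) = a \<longrightarrow> (\<forall>j\<in>{1..Suc i}. f j \<rho> \<le> \<rho> j) \<longrightarrow>
     (\<exists>\<rho>' k. srr (boxdot w nr) f (Suc i) \<rho> \<rho>' k \<and> (\<forall>j. \<rho>' j \<le> \<rho> j))" for a
  proof (induction a rule: wf_induct_rule[OF wfN])
    case (1 a)
    show ?case
    proof (intro allI impI)
      fix \<rho> assume ra: "\<rho> (Suc i) = a" and post: "\<forall>j\<in>{1..Suc i}. f j \<rho> \<le> \<rho> j"
      obtain \<rho>1 k1 where r1: "srr (boxdot w nr) f i \<rho> \<rho>1 k1" "\<forall>j. \<rho>1 j \<le> \<rho> j"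
        using Suc.IH[of \<rho>] Suc.prems post by auto
      have eq: "\<rho>1 (Suc i) = \<rho> (Suc i)" using srr_frame[OF r1(1)] by simp
      have post1: "\<forall>j\<in>{1..i}. f j \<rho>1 \<le> \<rho>1 j" using srr_post[OF r1(1) boxdot_prop[OF W]] .
      define b where "b = f (Suc i) \<rho>1"
      have "b \<le> f (Suc i) \<rho>" unfolding b_def
        using mono Suc.prems r1(2) unfolding monotonic_rhs_def by auto
      also have "\<dots> \<le> \<rho> (Suc i)" using post by auto
      finally have ba: "b \<le> \<rho>1 (Suc i)" using eq by simp
      have bd: "boxdot w nr (\<rho>1 (Suc i)) b = nr (\<rho>1 (Suc i)) b" using ba by (simp add: boxdot_def)
      have nrp: "b \<le> nr (\<rho>1 (Suc i)) b \<and> nr (\<rho>1 (Suc i)) b \<le> \<rho>1 (Suc i)"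
        using NR ba unfolding narrowing_def by blast
      show "\<exists>\<rho>' k. srr (boxdot w nr) f (Suc i) \<rho> \<rho>' k \<and> (\<forall>j. \<rho>' j \<le> \<rho> j)"
      proof (cases "boxdot w nr (\<rho>1 (Suc i)) (f (Suc i) \<rho>1) = \<rho>1 (Suc i)")
        case True
        show ?thesis using srr.stable[OF r1(1) True] r1(2) by blast
      next
        case False
        define c where "c = nr (\<rho>1 (Suc i)) b"
        define \<rho>2 where "\<rho>2 = \<rho>1(Suc i := c)"
        have post2: "\<forall>j\<in>{1..Suc i}. f j \<rho>2 \<le> \<rho>2 j" unfolding \<rho>2_def
          by (rule post_step[OF post1 _ _ Suc.prems(1) mono]) (use nrp in \<open>auto simp: b_def c_def\<close>)
        have inN: "(\<rho>2 (Suc i), a) \<in> N" unfolding N_def \<rho>2_def c_def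
          using ba eq ra False bd by (auto simp: b_def)
        obtain \<rho>3 k2 where r3: "srr (boxdot w nr) f (Suc i) \<rho>2 \<rho>3 k2" "\<forall>j. \<rho>3 j \<le> \<rho>2 j"
          using 1[OF inN] post2 by auto
        have run: "srr (boxdot w nr) f (Suc i) \<rho> \<rho>3 (k1 + 1 + k2)"
          using srr.update[OF r1(1) False r3(1)[unfolded \<rho>2_def c_def b_def bd[unfolded b_def, symmetric]]] .
        have "\<forall>j. \<rho>2 j \<le> \<rho>1 j" using nrp by (auto simp: \<rho>2_def c_def)
        then have "\<forall>j. \<rho>3 j \<le> \<rho> j" using r1(2) r3(2) by (meson order_trans)
        then show ?thesis using run by blast
      qed
    qed
  qed
  then show ?case using Suc.prems by blast
qed

lemma partB:
  assumes W: "widening w" and NR: "narrowing nr" and mono: "\<forall>i\<in>{1..n}. monotonic_rhs n (f i)"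
  shows "i \<le> n \<Longrightarrow> \<exists>\<rho>' k. srr (boxdot w nr) f i \<rho> \<rho>' k"
proof (induction i arbitrary: \<rho>)
  case 0 show ?case by (intro exI, rule srr.zero)
next
  case (Suc i)
  define Wr where "Wr = {(x, y). \<exists>b. x = w y b \<and> x \<noteq> y}"
  have wfW: "wf Wr"
    unfolding wf_iff_no_infinite_down_chain
  proof
    assume "\<exists>g. \<forall>i. (g (Suc i), g i) \<in> Wr"
    then obtain g where "\<forall>i. \<exists>b. g (Suc i) = w (g i) b \<and> g (Suc i) \<noteq> g i"
      unfolding Wr_def by auto
    then obtain B where "\<forall>i. g (Suc i) = w (g i) (B i) \<and> g (Suc i) \<noteq> g i"
      by metis
    then show False using W unfolding widening_def by blast
  qed
  have "\<forall>\<rho>. \<rho> (Suc i) = a \<longrightarrow> (\<exists>\<rho>' k. srr (boxdot w nr) f (Suc i) \<rho> \<rho>' k)" for a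
  proof (induction a rule: wf_induct_rule[OF wfW])
    case (1 a)
    show ?case
    proof (intro allI impI)
      fix \<rho> assume ra: "\<rho> (Suc i) = a"
      obtain \<rho>1 k1 where r1: "srr (boxdot w nr) f i \<rho> \<rho>1 k1"
        using Suc.IH[of \<rho>] Suc.prems by auto
      have eq: "\<rho>1 (Suc i) = \<rho> (Suc i)" using srr_frame[OF r1(1)] by simp
      have post1: "\<forall>j\<in>{1..i}. f j \<rho>1 \<le> \<rho>1 j" using srr_post[OF r1(1) boxdot_prop[OF W]] .
      define b where "b = f (Suc i) \<rho>1"
      show "\<exists>\<rho>' k. srr (boxdot w nr) f (Suc i) \<rho> \<rho>' k"
      proof (cases "boxdot w nr (\<rho>1 (Suc i)) (f (Suc i) \<rho>1) = \<rho>1 (Suc i)")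
        case True
        show ?thesis using srr.stable[OF r1(1) True] by blast
      next
        case False
        define c where "c = boxdot w nr (\<rho>1 (Suc i)) b"
        define \<rho>2 where "\<rho>2 = \<rho>1(Suc i := c)"
        have upd: "srr (boxdot w nr) f (Suc i) \<rho>2 \<rho>3 k2 \<Longrightarrow> srr (boxdot w nr) f (Suc i) \<rho> \<rho>3 (k1 + 1 + k2)"
          for \<rho>3 k2
          using srr.update[OF r1(1) False, of \<rho>3 k2] unfolding \<rho>2_def c_def b_def by blast
        show ?thesis
        proof (cases "b \<le> \<rho>1 (Suc i)")
          case True
          have bd: "c = nr (\<rho>1 (Suc i)) b" using True by (simp add: boxdot_def c_def)
          have nrp: "b \<le> c \<and> c \<le> \<rho>1 (Suc i)"
            using NR True bd unfolding narrowing_def by blast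
          have post2: "\<forall>j\<in>{1..Suc i}. f j \<rho>2 \<le> \<rho>2 j" unfolding \<rho>2_def
            by (rule post_step[OF post1 _ _ Suc.prems(1) mono]) (use nrp in \<open>auto simp: b_def\<close>)
          obtain \<rho>3 k2 where "srr (boxdot w nr) f (Suc i) \<rho>2 \<rho>3 k2"
            using partA[OF W NR mono Suc.prems(1) post2] by blast
          then show ?thesis using upd by blast
        next
          case nle: False
          have bd: "c = w (\<rho>1 (Suc i)) b" using nle by (simp add: boxdot_def c_def)
          have inW: "(\<rho>2 (Suc i), a) \<in> Wr" unfolding Wr_def \<rho>2_def
            using bd eq ra False by (auto simp: b_def c_def)
          obtain \<rho>3 k2 where "srr (boxdot w nr) f (Suc i) \<rho>2 \<rho>3 k2"
            using 1[OF inW] by blast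
          then show ?thesis using upd by blast
        qed
      qed
    qed
  qed
  then show ?case by blast
qed

lemma gauss2: "2 * (\<Sum>j\<in>{1..n::nat}. j) = n * (n + 1)"
  by (induction n) (auto simp: algebra_simps)

theorem mainTheorem4:
  fixes n :: nat and f :: "nat \<Rightarrow> (nat \<Rightarrow> 'd::order) \<Rightarrow> 'd" and \<rho>0 :: "nat \<Rightarrow> 'd"
  assumes dir: "directed_set TYPE('d)"
    and mono: "\<forall>i\<in>{1..n}. monotonic_rhs n (f i)"
  shows "(\<forall>h join. has_height TYPE('d) h \<and> upper_bound_op join \<longrightarrow>
            (\<exists>\<rho> k. srr join f n \<rho>0 \<rho> k \<and> post_solution n f \<rho> \<and>
                   real k \<le> real n + real h / 2 * real n * (real n + 1)))
       \<and> (\<forall>w nr. widening w \<and> narrowing nr \<longrightarrow>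
            (\<exists>\<rho> k. srr (boxdot w nr) f n \<rho>0 \<rho> k \<and> post_solution n f \<rho>))"
proof (intro conjI allI impI)
  fix h and join :: "'d \<Rightarrow> 'd \<Rightarrow> 'd"
  assume a: "has_height TYPE('d) h \<and> upper_bound_op join"
  then have H: "has_height TYPE('d) h" and J: "upper_bound_op join" by auto
  obtain \<rho> k where r: "srr join f n \<rho>0 \<rho> k" "k + S n \<rho> \<le> n + S n \<rho>0"
    using partC[OF H J, of f n \<rho>0] by blast
  have jp: "\<forall>a b. join a b = a \<longrightarrow> b \<le> a" using J unfolding upper_bound_op_def by metis
  have post: "post_solution n f \<rho>" unfolding post_solution_def using srr_post[OF r(1) jp] .
  have "S n \<rho>0 \<le> (\<Sum>j\<in>{1..n}. j * h)"
    by (rule sum_mono) (use ht_props(2)[OF H] in auto)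
  also have "\<dots> = h * (\<Sum>j\<in>{1..n}. j)" by (simp add: sum_distrib_left mult.commute)
  finally have kb: "k \<le> n + h * (\<Sum>j\<in>{1..n}. j)" using r(2) by linarith
  have g: "2 * real (\<Sum>j\<in>{1..n}. j) = real n * (real n + 1)"
    using arg_cong[OF gauss2[of n], of real] by (simp add: algebra_simps)
  have "real k \<le> real n + real h * real (\<Sum>j\<in>{1..n}. j)"
    using kb by (metis of_nat_add of_nat_le_iff of_nat_mult)
  also have "\<dots> = real n + real h / 2 * real n * (real n + 1)"
    using g by (simp add: field_simps)
  finally show "\<exists>\<rho> k. srr join f n \<rho>0 \<rho> k \<and> post_solution n f \<rho> \<and>
                   real k \<le> real n + real h / 2 * real n * (real n + 1)"
    using r(1) post by blast
next
  fix w nr :: "'d \<Rightarrow> 'd \<Rightarrow> 'd"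
  assume a: "widening w \<and> narrowing nr"
  then have W: "widening w" and NR: "narrowing nr" by auto
  obtain \<rho> k where r: "srr (boxdot w nr) f n \<rho>0 \<rho> k"
    using partB[OF W NR mono, of n \<rho>0] by blast
  have post: "post_solution n f \<rho>" unfolding post_solution_def
    using srr_post[OF r boxdot_prop[OF W]] .
  show "\<exists>\<rho> k. srr (boxdot w nr) f n \<rho>0 \<rho> k \<and> post_solution n f \<rho>" using r post by blast
qed

end
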